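(* For any convex body $K\subset\mathbb{R}^d$ with $o\in\mathrm{int}(K)$ and any $\lambda>0$, \[P(K,\lambda)\le(\lambda+1)^d\,\frac{\mathrm{vol}\bigl(\tfrac12(K-K)\bigr)}{\mathrm{vol}(K\cap-K)}.\]
   Context: A convex body is a compact convex set with non-empty interior. For a convex body $L$ with $o\in\mathrm{int}(L)$, $\|x\|_L=\inf\{\mu>0:x\in\mu L\}$. Both $K\cap -K$ and $\tfrac12(K-K)$ are $o$-symmetric convex bodies containing $o$ in their interior. $P(K,\lambda)$ is the maximum number of points $p_1,\dots,p_m$ in $\mathbb{R}^d$ such that \[\frac{\max\{\|p_i-p_j\|_{\frac12(K-K)}:1\le i<j\le m\}}{\min\{\|p_i-p_j\|_{K\cap-K}:1\le i<j\le m\}}\le\lambda.\] *)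

theory Defs
  imports "HOL-Analysis.Analysis"
begin

definition convex_body :: "'a::euclidean_space set \<Rightarrow> bool" where
  "convex_body K \<longleftrightarrow> compact K \<and> convex K \<and> interior K \<noteq> {}"

definition gauge_norm :: "'a::euclidean_space set \<Rightarrow> 'a \<Rightarrow> real" where
  "gauge_norm L x = Inf {\<mu>. \<mu> > 0 \<and> x \<in> (\<lambda>y. \<mu> *\<^sub>R y) ` L}"

definition half_diff :: "'a::euclidean_space set \<Rightarrow> 'a set" where
  "half_diff K = (\<lambda>x. (1/2::real) *\<^sub>R x) ` {x - y | x y. x \<in> K \<and> y \<in> K}"

definition sym_inter :: "'a::euclidean_space set \<Rightarrow> 'a set" where
  "sym_inter K = K \<inter> uminus ` K"

text \<open>A finite point set S (distinct points p_1..p_m) is admissible for (K, lambda) if the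
  maximal pairwise distance in the norm of half_diff K is at most lambda times the minimal
  pairwise distance in the norm of sym_inter K (vacuous for fewer than two points).\<close>
definition admissible :: "'a::euclidean_space set \<Rightarrow> real \<Rightarrow> 'a set \<Rightarrow> bool" where
  "admissible K lam S \<longleftrightarrow>
     (\<forall>p\<in>S. \<forall>q\<in>S. \<forall>r\<in>S. \<forall>s\<in>S. p \<noteq> q \<longrightarrow> r \<noteq> s \<longrightarrow>
        gauge_norm (half_diff K) (p - q) \<le> lam * gauge_norm (sym_inter K) (r - s))"

end

theory Submission
  imports Defs
begin


definition mid :: "'a::euclidean_space set \<Rightarrow> 'a set \<Rightarrow> 'a set" where
  "mid A B = (\<lambda>p. (1/2::real) *\<^sub>R fst p + (1/2::real) *\<^sub>R snd p) ` (A \<times> B)"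

lemma compact_mid: "compact A \<Longrightarrow> compact B \<Longrightarrow> compact (mid A B)"
  unfolding mid_def by (intro compact_continuous_image compact_Times continuous_intros)

lemma mid_mono: "A \<subseteq> A' \<Longrightarrow> B \<subseteq> B' \<Longrightarrow> mid A B \<subseteq> mid A' B'"
  by (auto simp: mid_def)

lemma mid_commute: "mid A B = mid B A"
  unfolding mid_def by (force simp: image_iff add.commute)

lemma mid_memI: "x \<in> A \<Longrightarrow> y \<in> B \<Longrightarrow> (1/2::real) *\<^sub>R x + (1/2::real) *\<^sub>R y \<in> mid A B"
  unfolding mid_def by (rule image_eqI[of _ _ "(x,y)"]) auto

lemma mid_memE: "z \<in> mid A B \<Longrightarrow> (\<And>x y. x \<in> A \<Longrightarrow> y \<in> B \<Longrightarrow> z = (1/2::real) *\<^sub>R x + (1/2::real) *\<^sub>R y \<Longrightarrow> P) \<Longrightarrow> P"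
  unfolding mid_def by auto

definition boxfam :: "'a::euclidean_space set set \<Rightarrow> bool" where
  "boxfam F \<longleftrightarrow> finite F \<and> (\<forall>X\<in>F. \<exists>a b. X = cbox a b) \<and> pairwise (\<lambda>X Y. interior X \<inter> interior Y = {}) F"

definition npos :: "'a::euclidean_space set set \<Rightarrow> nat" where
  "npos F = card {X\<in>F. 0 < measure lebesgue X}"

lemma boxfam_cboxE:
  assumes "boxfam F" "X \<in> F"
  obtains a b where "X = cbox a b"
proof -
  have "\<forall>X\<in>F. \<exists>a b. X = cbox a b" using assms(1) unfolding boxfam_def by blast
  then have "\<exists>a b. X = cbox a b" using assms(2) by blast
  then show ?thesis using that by blast
qed

lemma boxfam_finite: "boxfam F \<Longrightarrow> finite F"
  unfolding boxfam_def by blast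

lemma boxfam_disj: "boxfam F \<Longrightarrow> X \<in> F \<Longrightarrow> Y \<in> F \<Longrightarrow> X \<noteq> Y \<Longrightarrow> interior X \<inter> interior Y = {}"
  unfolding boxfam_def pairwise_def by blast

lemma boxfam_compact: "boxfam F \<Longrightarrow> compact (\<Union>F)"
  unfolding boxfam_def by (auto intro!: compact_Union)

lemma boxfam_measure:
  assumes "boxfam F"
  shows "measure lebesgue (\<Union>F) = (\<Sum>X\<in>F. measure lebesgue X)"
proof (rule measure_negligible_finite_Union)
  show "finite F" using assms by (simp add: boxfam_def)
  show "S \<in> lmeasurable" if "S \<in> F" for S
    using assms that by (auto simp: boxfam_def)
  show "pairwise (\<lambda>S T. negligible (S \<inter> T)) F"
    unfolding pairwise_def
  proof (intro ballI impI)
    fix X Y assume XY: "X \<in> F" "Y \<in> F" "X \<noteq> Y"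
    then obtain a b c d where X: "X = cbox a b" and Y: "Y = cbox c d"
      using assms by (meson boxfam_def)
    have "interior X \<inter> interior Y = {}" using assms XY by (auto simp: boxfam_def pairwise_def)
    then have "X \<inter> Y \<subseteq> (cbox a b - box a b) \<union> (cbox c d - box c d)"
      using X Y by auto
    moreover have "negligible ((cbox a b - box a b) \<union> (cbox c d - box c d))"
      by (simp add: negligible_frontier_interval)
    ultimately show "negligible (X \<inter> Y)" by (rule negligible_subset[rotated])
  qed
qed

lemma split_measure:
  fixes S :: "'a::euclidean_space set"
  assumes "compact S" "k \<in> Basis"
  shows "measure lebesgue S = measure lebesgue (S \<inter> {x. x\<bullet>k \<le> c}) + measure lebesgue (S \<inter> {x. x\<bullet>k \<ge> c})"
proof -
  have m1: "S \<inter> {x. x\<bullet>k \<le> c} \<in> lmeasurable" 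
    by (intro lmeasurable_compact compact_Int_closed assms closed_halfspace_component_le)
  have m2: "S \<inter> {x. x\<bullet>k \<ge> c} \<in> lmeasurable" 
    by (intro lmeasurable_compact compact_Int_closed assms closed_halfspace_component_ge)
  have "negligible ((S \<inter> {x. x\<bullet>k \<le> c}) \<inter> (S \<inter> {x. x\<bullet>k \<ge> c}))"
    by (rule negligible_subset[OF negligible_standard_hyperplane[OF assms(2), of c]]) auto
  then have z: "measure lebesgue ((S \<inter> {x. x\<bullet>k \<le> c}) \<inter> (S \<inter> {x. x\<bullet>k \<ge> c})) = 0"
    by (rule negligible_imp_measure0)
  have "S = (S \<inter> {x. x\<bullet>k \<le> c}) \<union> (S \<inter> {x. x\<bullet>k \<ge> c})" by auto
  then have "measure lebesgue S = measure lebesgue ((S \<inter> {x. x\<bullet>k \<le> c}) \<union> (S \<inter> {x. x\<bullet>k \<ge> c}))"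
    by simp
  also have "\<dots> = measure lebesgue (S \<inter> {x. x\<bullet>k \<le> c}) + measure lebesgue (S \<inter> {x. x\<bullet>k \<ge> c})"
    using measure_Un3[OF m1 m2] z by simp
  finally show ?thesis .
qed

lemma cbox_pos_lt:
  assumes "0 < measure lebesgue (cbox a (b::'a::euclidean_space))" "i \<in> Basis"
  shows "a\<bullet>i < b\<bullet>i"
proof -
  have m: "measure lebesgue (cbox a b) = measure lborel (cbox a b)" by simp
  have h: "0 < (if \<forall>i\<in>Basis. a\<bullet>i \<le> b\<bullet>i then \<Prod>i\<in>Basis. b\<bullet>i - a\<bullet>i else 0)"
    using assms(1) unfolding m content_cbox_cases .
  have le: "\<forall>i\<in>Basis. a\<bullet>i \<le> b\<bullet>i"
  proof (rule ccontr)
    assume n: "\<not> (\<forall>i\<in>Basis. a\<bullet>i \<le> b\<bullet>i)"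
    show False using h unfolding if_not_P[OF n] by simp
  qed
  have p: "0 < (\<Prod>i\<in>Basis. b\<bullet>i - a\<bullet>i)" using h unfolding if_P[OF le] .
  have ne: "b\<bullet>i - a\<bullet>i \<noteq> 0"
  proof
    assume z: "b\<bullet>i - a\<bullet>i = 0"
    have "(\<Prod>i\<in>Basis. b\<bullet>i - a\<bullet>i) = 0" by (rule prod_zero) (use assms(2) z in auto)
    then show False using p by linarith
  qed
  have "a\<bullet>i \<le> b\<bullet>i" using le assms(2) by blast
  then show ?thesis using ne by linarith
qed

lemma box_separate:
  assumes X: "X = cbox a b" and Y: "Y = cbox a' b'" and dis: "interior X \<inter> interior Y = {}"
    and pX: "0 < measure lebesgue X" and pY: "0 < measure lebesgue Y"
  shows "\<exists>k\<in>Basis. \<exists>c. (X \<subseteq> {x. x\<bullet>k \<le> c} \<and> Y \<subseteq> {x. x\<bullet>k \<ge> c}) \<or> (Y \<subseteq> {x. x\<bullet>k \<le> c} \<and> X \<subseteq> {x. x\<bullet>k \<ge> c})"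
proof -
  have "box a b \<inter> box a' b' = {}" using dis X Y by simp
  then obtain i where i: "i \<in> Basis" and
    "b\<bullet>i \<le> a\<bullet>i \<or> b'\<bullet>i \<le> a'\<bullet>i \<or> b\<bullet>i \<le> a'\<bullet>i \<or> b'\<bullet>i \<le> a\<bullet>i"
    unfolding disjoint_interval by blast
  moreover have "a\<bullet>i < b\<bullet>i" "a'\<bullet>i < b'\<bullet>i"
    using cbox_pos_lt pX pY X Y i by blast+
  ultimately have "b\<bullet>i \<le> a'\<bullet>i \<or> b'\<bullet>i \<le> a\<bullet>i" by linarith
  then show ?thesis
  proof
    assume h: "b\<bullet>i \<le> a'\<bullet>i"
    have "X \<subseteq> {x. x\<bullet>i \<le> b\<bullet>i}" using X i by (auto simp: mem_box)
    moreover have "Y \<subseteq> {x. x\<bullet>i \<ge> b\<bullet>i}" using Y i h by (force simp: mem_box)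
    ultimately show ?thesis using i by blast
  next
    assume h: "b'\<bullet>i \<le> a\<bullet>i"
    have "Y \<subseteq> {x. x\<bullet>i \<le> a\<bullet>i}" using Y i h by (force simp: mem_box)
    moreover have "X \<subseteq> {x. x\<bullet>i \<ge> a\<bullet>i}" using X i by (auto simp: mem_box)
    ultimately show ?thesis using i by blast
  qed
qed

lemma boxfam_cut_gen:
  assumes "boxfam F" "\<And>X. X \<in> F \<Longrightarrow> \<exists>a b. X \<inter> H = cbox a b"
  shows "boxfam ((\<lambda>X. X \<inter> H) ` F)"
  unfolding boxfam_def
proof (intro conjI)
  show "finite ((\<lambda>X. X \<inter> H) ` F)" using assms(1) unfolding boxfam_def by simp
  show "\<forall>Z\<in>(\<lambda>X. X \<inter> H) ` F. \<exists>a b. Z = cbox a b"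
  proof
    fix Z assume "Z \<in> (\<lambda>X. X \<inter> H) ` F"
    then obtain X where "X \<in> F" "Z = X \<inter> H" by blast
    then show "\<exists>a b. Z = cbox a b" using assms(2) by simp
  qed
  show "pairwise (\<lambda>X Y. interior X \<inter> interior Y = {}) ((\<lambda>X. X \<inter> H) ` F)"
    unfolding pairwise_def
  proof (intro ballI impI)
    fix Z1 Z2 assume "Z1 \<in> (\<lambda>X. X \<inter> H) ` F" "Z2 \<in> (\<lambda>X. X \<inter> H) ` F" "Z1 \<noteq> Z2"
    then obtain X1 X2 where X: "X1 \<in> F" "X2 \<in> F" "Z1 = X1 \<inter> H" "Z2 = X2 \<inter> H" "X1 \<noteq> X2" by blast
    have d: "interior X1 \<inter> interior X2 = {}"
      using assms(1) X(1,2,5) unfolding boxfam_def pairwise_def by blast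
    have "interior Z1 \<subseteq> interior X1" "interior Z2 \<subseteq> interior X2"
      using X(3,4) by (simp_all add: interior_mono)
    then show "interior Z1 \<inter> interior Z2 = {}" using d by blast
  qed
qed

lemma cut_cbox1:
  assumes "boxfam F" "k \<in> Basis" "X \<in> F" shows "\<exists>a b. X \<inter> {x. x\<bullet>k \<le> c} = cbox a b"
proof -
  have "\<forall>X\<in>F. \<exists>a b. X = cbox a b" using assms(1) unfolding boxfam_def by blast
  then obtain a b where X: "X = cbox a b" using assms(3) by blast
  have "X \<inter> {x. x\<bullet>k \<le> c} = cbox a (\<Sum>i\<in>Basis. (if i = k then min (b\<bullet>k) c else b\<bullet>i) *\<^sub>R i)"
    unfolding X by (rule interval_split(1)[OF assms(2)])
  then show ?thesis by - (rule exI, rule exI, assumption)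
qed

lemma cut_cbox2:
  assumes "boxfam F" "k \<in> Basis" "X \<in> F" shows "\<exists>a b. X \<inter> {x. x\<bullet>k \<ge> c} = cbox a b"
proof -
  have "\<forall>X\<in>F. \<exists>a b. X = cbox a b" using assms(1) unfolding boxfam_def by blast
  then obtain a b where X: "X = cbox a b" using assms(3) by blast
  have "X \<inter> {x. x\<bullet>k \<ge> c} = cbox (\<Sum>i\<in>Basis. (if i = k then max (a\<bullet>k) c else a\<bullet>i) *\<^sub>R i) b"
    unfolding X by (rule interval_split(2)[OF assms(2)])
  then show ?thesis by - (rule exI, rule exI, assumption)
qed

lemma boxfam_cut:
  assumes "boxfam F" "k \<in> Basis"
  shows "boxfam ((\<lambda>X. X \<inter> {x. x\<bullet>k \<le> c}) ` F)" "boxfam ((\<lambda>X. X \<inter> {x. x\<bullet>k \<ge> c}) ` F)"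
  by (rule boxfam_cut_gen[OF assms(1) cut_cbox1[OF assms]], assumption)
     (rule boxfam_cut_gen[OF assms(1) cut_cbox2[OF assms]], assumption)

lemma npos_cut_le:
  assumes "finite F" "\<And>X. X \<in> F \<Longrightarrow> f X \<subseteq> X" "\<And>X. X \<in> F \<Longrightarrow> X \<in> lmeasurable"
    "\<And>X. X \<in> F \<Longrightarrow> f X \<in> lmeasurable"
  shows "npos (f ` F) \<le> npos F"
proof -
  have "{Z\<in>f ` F. 0 < measure lebesgue Z} \<subseteq> f ` {X\<in>F. 0 < measure lebesgue X}"
  proof
    fix Z assume "Z \<in> {Z\<in>f ` F. 0 < measure lebesgue Z}"
    then obtain X where X: "X \<in> F" "Z = f X" "0 < measure lebesgue (f X)" by auto
    have "measure lebesgue (f X) \<le> measure lebesgue X"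
      using assms X by (intro measure_mono_fmeasurable) auto
    then show "Z \<in> f ` {X\<in>F. 0 < measure lebesgue X}" using X by auto
  qed
  then have "npos (f ` F) \<le> card (f ` {X\<in>F. 0 < measure lebesgue X})"
    unfolding npos_def using assms(1) by (intro card_mono) auto
  also have "\<dots> \<le> npos F" unfolding npos_def by (rule card_image_le) (use assms(1) in auto)
  finally show ?thesis .
qed

lemma npos_cut_less:
  assumes "finite F" "\<And>X. X \<in> F \<Longrightarrow> f X \<subseteq> X" "\<And>X. X \<in> F \<Longrightarrow> X \<in> lmeasurable"
    "\<And>X. X \<in> F \<Longrightarrow> f X \<in> lmeasurable" "Y \<in> F" "0 < measure lebesgue Y" "measure lebesgue (f Y) = 0"
  shows "npos (f ` F) < npos F"
proof -
  let ?P = "{X\<in>F. 0 < measure lebesgue X}"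
  have "{Z\<in>f ` F. 0 < measure lebesgue Z} \<subseteq> f ` (?P - {Y})"
  proof
    fix Z assume "Z \<in> {Z\<in>f ` F. 0 < measure lebesgue Z}"
    then obtain X where X: "X \<in> F" "Z = f X" "0 < measure lebesgue (f X)" by auto
    have "measure lebesgue (f X) \<le> measure lebesgue X"
      using assms X by (intro measure_mono_fmeasurable) auto
    moreover have "X \<noteq> Y" using X assms by auto
    ultimately show "Z \<in> f ` (?P - {Y})" using X by auto
  qed
  then have "npos (f ` F) \<le> card (f ` (?P - {Y}))"
    unfolding npos_def using assms(1) by (intro card_mono) auto
  also have "\<dots> \<le> card (?P - {Y})" by (rule card_image_le) (use assms(1) in auto)
  also have "\<dots> < card ?P" using assms by (intro card_Diff1_less) auto
  finally show ?thesis unfolding npos_def .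
qed



lemma inner_sum_Basis_if:
  fixes f :: "'a::euclidean_space \<Rightarrow> real"
  assumes "i \<in> Basis"
  shows "(\<Sum>j\<in>Basis. f j *\<^sub>R j) \<bullet> i = f i"
  using assms by (rule inner_sum_left_Basis)

lemma slab_lip:
  fixes S :: "'a::euclidean_space set"
  assumes "compact S" "k \<in> Basis"
  obtains L where "0 \<le> L" "\<And>c1 c2. c1 \<le> c2 \<Longrightarrow>
      0 \<le> measure lebesgue (S \<inter> {x. x\<bullet>k \<le> c2}) - measure lebesgue (S \<inter> {x. x\<bullet>k \<le> c1}) \<and>
      measure lebesgue (S \<inter> {x. x\<bullet>k \<le> c2}) - measure lebesgue (S \<inter> {x. x\<bullet>k \<le> c1}) \<le> L * (c2 - c1)"
proof -
  obtain a where a: "S \<subseteq> cbox (-a) a"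
    using bounded_subset_cbox_symmetric compact_imp_bounded assms(1) by metis
  define L where "L = (\<Prod>i\<in>Basis-{k}. \<bar>2 * (a\<bullet>i)\<bar>)"
  have L0: "0 \<le> L" unfolding L_def by (simp add: prod_nonneg)
  show ?thesis
  proof (rule that[OF L0], intro conjI)
    fix c1 c2 :: real assume c12: "c1 \<le> c2"
    let ?S2 = "S \<inter> {x. x\<bullet>k \<le> c2}"
    have cS2: "compact ?S2"
      by (intro compact_Int_closed assms closed_halfspace_component_le)
    have "measure lebesgue ?S2 = measure lebesgue (?S2 \<inter> {x. x\<bullet>k \<le> c1}) + measure lebesgue (?S2 \<inter> {x. x\<bullet>k \<ge> c1})"
      by (rule split_measure[OF cS2 assms(2)])
    moreover have "?S2 \<inter> {x. x\<bullet>k \<le> c1} = S \<inter> {x. x\<bullet>k \<le> c1}" using c12 by auto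
    ultimately have eq: "measure lebesgue ?S2 - measure lebesgue (S \<inter> {x. x\<bullet>k \<le> c1}) = measure lebesgue (?S2 \<inter> {x. x\<bullet>k \<ge> c1})"
      by simp
    then show "0 \<le> measure lebesgue ?S2 - measure lebesgue (S \<inter> {x. x\<bullet>k \<le> c1})" by simp
    define v :: 'a where "v = (\<Sum>i\<in>Basis. (if i = k then min ((a)\<bullet>k) c2 else (a)\<bullet>i) *\<^sub>R i)"
    define u :: 'a where "u = (\<Sum>i\<in>Basis. (if i = k then max ((-a)\<bullet>k) c1 else (-a)\<bullet>i) *\<^sub>R i)"
    have box: "cbox (-a) a \<inter> {x. x\<bullet>k \<le> c2} \<inter> {x. x\<bullet>k \<ge> c1} = cbox u v"
      unfolding u_def v_def interval_split(1)[OF assms(2)] by (rule interval_split(2)[OF assms(2)])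
    have "?S2 \<inter> {x. x\<bullet>k \<ge> c1} \<subseteq> cbox u v" using a box by blast
    then have "measure lebesgue (?S2 \<inter> {x. x\<bullet>k \<ge> c1}) \<le> measure lebesgue (cbox u v)"
      by (intro measure_mono_fmeasurable) 
         (auto intro!: lmeasurable_compact compact_Int_closed assms closed_halfspace_component_ge cS2 fmeasurableD)
    also have "\<dots> \<le> L * (c2 - c1)"
    proof (cases "\<forall>i\<in>Basis. u\<bullet>i \<le> v\<bullet>i")
      case False
      have m: "measure lebesgue (cbox u v) = measure lborel (cbox u v)" by simp
      have "measure lebesgue (cbox u v) = 0"
        unfolding m content_cbox_cases if_not_P[OF False] by (rule refl)
      then show ?thesis using L0 c12 by simp
    next
      case True
      have uv: "u\<bullet>i = (if i = k then max ((-a)\<bullet>k) c1 else (-a)\<bullet>i)" "v\<bullet>i = (if i = k then min ((a)\<bullet>k) c2 else (a)\<bullet>i)"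
        if "i \<in> Basis" for i
        unfolding u_def v_def using that by (simp_all add: inner_sum_Basis_if)
      have "measure lebesgue (cbox u v) = (\<Prod>i\<in>Basis. v\<bullet>i - u\<bullet>i)"
        using content_cbox[OF True] by simp
      also have "\<dots> = (v\<bullet>k - u\<bullet>k) * (\<Prod>i\<in>Basis-{k}. v\<bullet>i - u\<bullet>i)"
        using assms(2) by (simp add: prod.remove)
      also have "(\<Prod>i\<in>Basis-{k}. v\<bullet>i - u\<bullet>i) = L"
        unfolding L_def
      proof (rule prod.cong[OF refl])
        fix i assume i: "i \<in> Basis - {k}"
        then have "u\<bullet>i \<le> v\<bullet>i" using True by auto
        then show "v\<bullet>i - u\<bullet>i = \<bar>2 * (a\<bullet>i)\<bar>" using uv[of i] i by auto
      qed
      also have "(v\<bullet>k - u\<bullet>k) * L \<le> L * (c2 - c1)"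
      proof -
        have "v\<bullet>k - u\<bullet>k \<le> c2 - c1" using uv[OF assms(2)] by simp
        then show ?thesis using L0 by (simp add: mult.commute mult_left_mono)
      qed
      finally show ?thesis .
    qed
    finally show "measure lebesgue ?S2 - measure lebesgue (S \<inter> {x. x\<bullet>k \<le> c1}) \<le> L * (c2 - c1)"
      using eq by simp
  qed
qed

lemma find_split:
  fixes S :: "'a::euclidean_space set"
  assumes "compact S" "k \<in> Basis" "0 \<le> y" "y \<le> measure lebesgue S"
  obtains c where "measure lebesgue (S \<inter> {x. x\<bullet>k \<le> c}) = y"
proof -
  obtain L where L: "0 \<le> L" "\<And>c1 c2. c1 \<le> c2 \<Longrightarrow>
      0 \<le> measure lebesgue (S \<inter> {x. x\<bullet>k \<le> c2}) - measure lebesgue (S \<inter> {x. x\<bullet>k \<le> c1}) \<and>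
      measure lebesgue (S \<inter> {x. x\<bullet>k \<le> c2}) - measure lebesgue (S \<inter> {x. x\<bullet>k \<le> c1}) \<le> L * (c2 - c1)"
    using slab_lip[OF assms(1,2)] by blast
  define g where "g c = measure lebesgue (S \<inter> {x. x\<bullet>k \<le> c})" for c
  obtain a where a: "S \<subseteq> cbox (-a) a"
    using bounded_subset_cbox_symmetric compact_imp_bounded assms(1) by metis
  define lo where "lo = - \<bar>a\<bullet>k\<bar> - 1"
  define hi where "hi = \<bar>a\<bullet>k\<bar>"
  have "x\<bullet>k \<le> a\<bullet>k" "-(a\<bullet>k) \<le> x\<bullet>k" if "x \<in> S" for x
    using a that assms(2) by (auto simp: mem_box)
  note xS = this
  have "S \<inter> {x. x\<bullet>k \<le> lo} = {}"
  proof (rule ccontr)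
    assume "S \<inter> {x. x\<bullet>k \<le> lo} \<noteq> {}"
    then obtain x where "x \<in> S" "x\<bullet>k \<le> lo" by blast
    moreover have "-(a\<bullet>k) \<ge> - \<bar>a\<bullet>k\<bar>" by simp
    ultimately show False using xS(2) unfolding lo_def by fastforce
  qed
  then have glo: "g lo = 0" unfolding g_def by simp
  have "S \<inter> {x. x\<bullet>k \<le> hi} = S"
  proof (intro equalityI subsetI)
    fix x assume "x \<in> S"
    then have "x\<bullet>k \<le> hi" using xS(1) unfolding hi_def by (meson abs_ge_self order.trans)
    then show "x \<in> S \<inter> {x. x\<bullet>k \<le> hi}" using \<open>x \<in> S\<close> by simp
  qed simp
  then have ghi: "g hi = measure lebesgue S" unfolding g_def by simp
  have "continuous_on {lo..hi} g"
  proof (rule lipschitz_on_continuous_on)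
    show "L-lipschitz_on {lo..hi} g"
    proof (rule lipschitz_onI[OF _ L(1)])
      fix x y :: real
      show "dist (g x) (g y) \<le> L * dist x y"
      proof (cases "x \<le> y")
        case True then show ?thesis using L(2)[of x y] by (simp add: g_def dist_real_def)
      next
        case False then show ?thesis using L(2)[of y x] by (simp add: g_def dist_real_def)
      qed
    qed
  qed
  moreover have "lo \<le> hi" unfolding lo_def hi_def by simp
  ultimately obtain c where "g c = y"
    using IVT'[of g lo y hi] glo ghi assms(3,4) by auto
  then have "measure lebesgue (S \<inter> {x. x\<bullet>k \<le> c}) = y" unfolding g_def .
  then show ?thesis by (rule that)
qed

lemma prod_amgm:
  fixes x y :: "'b \<Rightarrow> real"
  assumes "finite I" "\<And>i. i \<in> I \<Longrightarrow> 0 \<le> x i" "\<And>i. i \<in> I \<Longrightarrow> 0 \<le> y i"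
  shows "min (prod x I) (prod y I) \<le> (\<Prod>i\<in>I. (x i + y i) / 2)"
proof -
  have px: "0 \<le> prod x I" and py: "0 \<le> prod y I" using assms by (auto intro: prod_nonneg)
  have "(min (prod x I) (prod y I))^2 \<le> prod x I * prod y I"
    unfolding power2_eq_square using px py by (intro mult_mono) auto
  also have "\<dots> = (\<Prod>i\<in>I. x i * y i)" by (simp add: prod.distrib)
  also have "\<dots> \<le> (\<Prod>i\<in>I. ((x i + y i)/2)^2)"
  proof (rule prod_mono)
    fix i assume "i \<in> I"
    then have nn: "0 \<le> x i" "0 \<le> y i" using assms by auto
    have e: "((x i + y i)/2)^2 - x i * y i = (x i - y i)^2 / 4"
      by (simp add: power2_eq_square field_simps)
    have "0 \<le> (x i - y i)^2 / 4" by simp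
    then have "x i * y i \<le> ((x i + y i)/2)^2" using e by linarith
    moreover have "0 \<le> x i * y i" using nn by simp
    ultimately show "0 \<le> x i * y i \<and> x i * y i \<le> ((x i + y i)/2)^2" by simp
  qed
  also have "\<dots> = (\<Prod>i\<in>I. (x i + y i)/2)^2" by (simp add: prod_power_distrib)
  finally show ?thesis
    by (rule power2_le_imp_le) (use assms in \<open>auto intro!: prod_nonneg\<close>)
qed

lemma box_mid_base:
  fixes a b a' b' :: "'a::euclidean_space"
  assumes X: "X = cbox a b" and Y: "Y = cbox a' b'"
    and pX: "0 < measure lebesgue X" and pY: "0 < measure lebesgue Y"
  shows "min (measure lebesgue X) (measure lebesgue Y) \<le> measure lebesgue (mid X Y)"
proof -
  have ab: "a\<bullet>i < b\<bullet>i" and ab': "a'\<bullet>i < b'\<bullet>i" if "i \<in> Basis" for i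
    using cbox_pos_lt pX pY X Y that by blast+
  define lo :: 'a where "lo = (1/2::real) *\<^sub>R a + (1/2::real) *\<^sub>R a'"
  define hi :: 'a where "hi = (1/2::real) *\<^sub>R b + (1/2::real) *\<^sub>R b'"
  have lohi: "lo\<bullet>i = (a\<bullet>i + a'\<bullet>i)/2" "hi\<bullet>i = (b\<bullet>i + b'\<bullet>i)/2" for i
    unfolding lo_def hi_def by (simp_all add: inner_add_left)
  have sub: "cbox lo hi \<subseteq> mid X Y"
  proof
    fix z assume z: "z \<in> cbox lo hi"
    define t where "t i = (z\<bullet>i - lo\<bullet>i) / (hi\<bullet>i - lo\<bullet>i)" for i :: 'a
    have pos: "0 < hi\<bullet>i - lo\<bullet>i" if "i \<in> Basis" for i unfolding lohi using ab[OF that] ab'[OF that] by (simp add: field_simps)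
    have t0: "0 \<le> t i" and t1: "t i \<le> 1" and tz: "t i * (hi\<bullet>i - lo\<bullet>i) = z\<bullet>i - lo\<bullet>i"
      if "i \<in> Basis" for i
      using z that pos[OF that] unfolding t_def by (auto simp: mem_box divide_le_eq_1)
    define x :: 'a where "x = (\<Sum>i\<in>Basis. (a\<bullet>i + t i * (b\<bullet>i - a\<bullet>i)) *\<^sub>R i)"
    define y :: 'a where "y = (\<Sum>i\<in>Basis. (a'\<bullet>i + t i * (b'\<bullet>i - a'\<bullet>i)) *\<^sub>R i)"
    have xi: "x\<bullet>i = a\<bullet>i + t i * (b\<bullet>i - a\<bullet>i)" and yi: "y\<bullet>i = a'\<bullet>i + t i * (b'\<bullet>i - a'\<bullet>i)"
      if "i \<in> Basis" for i unfolding x_def y_def using that by (simp_all add: inner_sum_Basis_if)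
    have "x \<in> X" unfolding X mem_box
    proof
      fix i :: 'a assume i: "i \<in> Basis"
      have "0 \<le> t i * (b\<bullet>i - a\<bullet>i)" using t0[OF i] ab[OF i] by simp
      moreover have "t i * (b\<bullet>i - a\<bullet>i) \<le> 1 * (b\<bullet>i - a\<bullet>i)"
        using t1[OF i] ab[OF i] by (intro mult_right_mono) auto
      ultimately show "a\<bullet>i \<le> x\<bullet>i \<and> x\<bullet>i \<le> b\<bullet>i" using xi[OF i] by simp
    qed
    moreover have "y \<in> Y" unfolding Y mem_box
    proof
      fix i :: 'a assume i: "i \<in> Basis"
      have "0 \<le> t i * (b'\<bullet>i - a'\<bullet>i)" using t0[OF i] ab'[OF i] by simp
      moreover have "t i * (b'\<bullet>i - a'\<bullet>i) \<le> 1 * (b'\<bullet>i - a'\<bullet>i)"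
        using t1[OF i] ab'[OF i] by (intro mult_right_mono) auto
      ultimately show "a'\<bullet>i \<le> y\<bullet>i \<and> y\<bullet>i \<le> b'\<bullet>i" using yi[OF i] by simp
    qed
    moreover have "z = (1/2::real) *\<^sub>R x + (1/2::real) *\<^sub>R y"
    proof (rule euclidean_eqI)
      fix i :: 'a assume i: "i \<in> Basis"
      have "((1/2::real) *\<^sub>R x + (1/2::real) *\<^sub>R y)\<bullet>i = x\<bullet>i/2 + y\<bullet>i/2"
        by (simp add: inner_add_left)
      also have "\<dots> = lo\<bullet>i + t i * (hi\<bullet>i - lo\<bullet>i)"
        unfolding xi[OF i] yi[OF i] lohi by (simp add: field_simps)
      finally have "((1/2::real) *\<^sub>R x + (1/2::real) *\<^sub>R y)\<bullet>i = lo\<bullet>i + t i * (hi\<bullet>i - lo\<bullet>i)" .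
      then show "z\<bullet>i = ((1/2::real) *\<^sub>R x + (1/2::real) *\<^sub>R y)\<bullet>i" using tz[OF i] by simp
    qed
    ultimately show "z \<in> mid X Y" using mid_memI by metis
  qed
  have le1: "\<forall>i\<in>Basis. lo\<bullet>i \<le> hi\<bullet>i"
  proof
    fix i :: 'a assume i: "i \<in> Basis"
    show "lo\<bullet>i \<le> hi\<bullet>i" unfolding lohi using ab[OF i] ab'[OF i] by (simp add: field_simps)
  qed
  have "measure lebesgue (cbox lo hi) = (\<Prod>i\<in>Basis. hi\<bullet>i - lo\<bullet>i)"
    using content_cbox[OF le1] by simp
  also have "\<dots> = (\<Prod>i\<in>Basis. ((b\<bullet>i - a\<bullet>i) + (b'\<bullet>i - a'\<bullet>i)) / 2)"
    using lohi by (intro prod.cong) (auto simp: field_simps)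
  finally have mc: "measure lebesgue (cbox lo hi) = (\<Prod>i\<in>Basis. ((b\<bullet>i - a\<bullet>i) + (b'\<bullet>i - a'\<bullet>i)) / 2)" .
  have mX: "measure lebesgue X = (\<Prod>i\<in>Basis. b\<bullet>i - a\<bullet>i)"
    using content_cbox[of a b] ab X by (simp add: less_imp_le)
  have mY: "measure lebesgue Y = (\<Prod>i\<in>Basis. b'\<bullet>i - a'\<bullet>i)"
    using content_cbox[of a' b'] ab' Y by (simp add: less_imp_le)
  have "min (measure lebesgue X) (measure lebesgue Y) \<le> measure lebesgue (cbox lo hi)"
    unfolding mX mY mc by (rule prod_amgm) (use ab ab' in \<open>auto simp: less_imp_le\<close>)
  also have "\<dots> \<le> measure lebesgue (mid X Y)"
    using sub by (intro measure_mono_fmeasurable lmeasurable_compact compact_mid) (auto simp: X Y)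
  finally show ?thesis .
qed



lemma bm_step:
  fixes A B :: "'a::euclidean_space set set"
  assumes IH: "\<And>F G :: 'a set set. boxfam F \<Longrightarrow> boxfam G \<Longrightarrow> npos F + npos G < npos A + npos B \<Longrightarrow>
      min (measure lebesgue (\<Union>F)) (measure lebesgue (\<Union>G)) \<le> measure lebesgue (mid (\<Union>F) (\<Union>G))"
    and bA: "boxfam A" and bB: "boxfam B" and two: "2 \<le> npos A"
  shows "min (measure lebesgue (\<Union>A)) (measure lebesgue (\<Union>B)) \<le> measure lebesgue (mid (\<Union>A) (\<Union>B))"
proof -
  let ?P = "{X\<in>A. 0 < measure lebesgue X}"
  have finA: "finite A" using bA by (rule boxfam_finite)
  have finB: "finite B" using bB by (rule boxfam_finite)
  have "\<not> card ?P \<le> Suc 0" using two unfolding npos_def by simp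
  then obtain X Y where XY: "X \<in> ?P" "Y \<in> ?P" "X \<noteq> Y"
    using card_le_Suc0_iff_eq[of ?P] finA by auto
  have XA: "X \<in> A" "Y \<in> A" using XY by simp_all
  obtain a b where X: "X = cbox a b" by (rule boxfam_cboxE[OF bA XA(1)])
  obtain a' b' where Y: "Y = cbox a' b'" by (rule boxfam_cboxE[OF bA XA(2)])
  have dis: "interior X \<inter> interior Y = {}" by (rule boxfam_disj[OF bA XA XY(3)])
  obtain k c where k: "k \<in> Basis" and
    sep: "(X \<subseteq> {x. x\<bullet>k \<le> c} \<and> Y \<subseteq> {x. x\<bullet>k \<ge> c}) \<or> (Y \<subseteq> {x. x\<bullet>k \<le> c} \<and> X \<subseteq> {x. x\<bullet>k \<ge> c})"
    using box_separate[OF X Y dis] XY by blast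
  then obtain X' Y' where X': "X' \<in> ?P" "X' \<subseteq> {x. x\<bullet>k \<le> c}" and Y': "Y' \<in> ?P" "Y' \<subseteq> {x. x\<bullet>k \<ge> c}"
    using XY by blast
  define SA where "SA = \<Union>A"
  define SB where "SB = \<Union>B"
  have cA: "compact SA" and cB: "compact SB" unfolding SA_def SB_def using bA bB boxfam_compact by blast+
  have meas: "Z \<inter> H \<in> lmeasurable" if "Z \<in> A \<union> B" "closed H" for Z H
  proof -
    obtain u v where "Z = cbox u v"
    proof (cases "Z \<in> A")
      case True then show ?thesis using boxfam_cboxE[OF bA] that by metis
    next
      case False then have "Z \<in> B" using \<open>Z \<in> A \<union> B\<close> by simp
      then show ?thesis using boxfam_cboxE[OF bB] that by metis
    qed
    then show ?thesis using that by (intro lmeasurable_compact compact_Int_closed) auto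
  qed
  have measZ: "Z \<in> lmeasurable" if "Z \<in> A \<union> B" for Z
    using meas[OF that, of UNIV] by simp
  have hyp0: "measure lebesgue (Z \<inter> {x. x\<bullet>k \<le> d}) = 0" if "Z \<subseteq> {x. x\<bullet>k \<ge> d}" for Z d
  proof -
    have "Z \<inter> {x. x\<bullet>k \<le> d} \<subseteq> {x. x\<bullet>k = d}" using that by auto
    then have "negligible (Z \<inter> {x. x\<bullet>k \<le> d})" by (rule negligible_subset[OF negligible_standard_hyperplane[OF k]])
    then show ?thesis by (rule negligible_imp_measure0)
  qed
  have hyp0': "measure lebesgue (Z \<inter> {x. x\<bullet>k \<ge> d}) = 0" if "Z \<subseteq> {x. x\<bullet>k \<le> d}" for Z d
  proof -
    have "Z \<inter> {x. x\<bullet>k \<ge> d} \<subseteq> {x. x\<bullet>k = d}" using that by auto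
    then have "negligible (Z \<inter> {x. x\<bullet>k \<ge> d})" by (rule negligible_subset[OF negligible_standard_hyperplane[OF k]])
    then show ?thesis by (rule negligible_imp_measure0)
  qed
  let ?a = "measure lebesgue SA" and ?b = "measure lebesgue SB"
  show ?thesis
  proof (cases "?a = 0 \<or> ?b = 0")
    case True
    then have "min ?a ?b \<le> 0" by (metis min.cobounded1 min.cobounded2 order_refl)
    moreover have "0 \<le> measure lebesgue (mid SA SB)" by (rule measure_nonneg)
    ultimately show ?thesis unfolding SA_def SB_def by linarith
  next
    case False
    then have apos: "0 < ?a" and bpos: "0 < ?b" using measure_nonneg[of lebesgue SA] measure_nonneg[of lebesgue SB] by linarith+
    define a1 where "a1 = measure lebesgue (SA \<inter> {x. x\<bullet>k \<le> c})"
    define a2 where "a2 = measure lebesgue (SA \<inter> {x. x\<bullet>k \<ge> c})"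
    have asum: "?a = a1 + a2" unfolding a1_def a2_def by (rule split_measure[OF cA k])
    have a10: "0 \<le> a1" and a20: "0 \<le> a2" unfolding a1_def a2_def by auto
    define y where "y = a1 * ?b / ?a"
    have y0: "0 \<le> y" unfolding y_def using a10 bpos apos by simp
    have yb: "y \<le> ?b"
    proof -
      have "a1 / ?a \<le> 1" using asum a20 apos by simp
      then have "?b * (a1 / ?a) \<le> ?b * 1" using bpos by (intro mult_left_mono) auto
      moreover have "a1 * ?b / ?a = ?b * (a1 / ?a)" by simp
      ultimately show ?thesis unfolding y_def by linarith
    qed
    obtain c' where c': "measure lebesgue (SB \<inter> {x. x\<bullet>k \<le> c'}) = y"
      using find_split[OF cB k y0 yb] by blast
    have b2: "measure lebesgue (SB \<inter> {x. x\<bullet>k \<ge> c'}) = ?b - y"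
      using split_measure[OF cB k, of c'] c' by simp
    define f1 where "f1 = (\<lambda>X::'a set. X \<inter> {x. x\<bullet>k \<le> c})"
    define f2 where "f2 = (\<lambda>X::'a set. X \<inter> {x. x\<bullet>k \<ge> c})"
    define g1 where "g1 = (\<lambda>X::'a set. X \<inter> {x. x\<bullet>k \<le> c'})"
    define g2 where "g2 = (\<lambda>X::'a set. X \<inter> {x. x\<bullet>k \<ge> c'})"
    have bf: "boxfam (f1 ` A)" "boxfam (f2 ` A)" "boxfam (g1 ` B)" "boxfam (g2 ` B)"
      unfolding f1_def f2_def g1_def g2_def using boxfam_cut[OF bA k] boxfam_cut[OF bB k] by auto
    have un: "\<Union>(f1 ` A) = SA \<inter> {x. x\<bullet>k \<le> c}" "\<Union>(f2 ` A) = SA \<inter> {x. x\<bullet>k \<ge> c}"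
      "\<Union>(g1 ` B) = SB \<inter> {x. x\<bullet>k \<le> c'}" "\<Union>(g2 ` B) = SB \<inter> {x. x\<bullet>k \<ge> c'}"
      unfolding f1_def f2_def g1_def g2_def SA_def SB_def by auto
    have mA: "X \<inter> H \<in> lmeasurable" if "X \<in> A" "closed H" for X H using meas that by blast
    have mB: "X \<inter> H \<in> lmeasurable" if "X \<in> B" "closed H" for X H using meas that by blast
    have n1: "npos (f1 ` A) < npos A"
    proof (rule npos_cut_less[OF finA, of f1 Y'])
      show "f1 X \<subseteq> X" for X unfolding f1_def by blast
      show "X \<in> lmeasurable" if "X \<in> A" for X using measZ that by blast
      show "f1 X \<in> lmeasurable" if "X \<in> A" for X unfolding f1_def using mA[OF that closed_halfspace_component_le] .
      show "Y' \<in> A" "0 < measure lebesgue Y'" using Y' by auto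
      show "measure lebesgue (f1 Y') = 0" unfolding f1_def using hyp0 Y'(2) by blast
    qed
    have n2: "npos (f2 ` A) < npos A"
    proof (rule npos_cut_less[OF finA, of f2 X'])
      show "f2 X \<subseteq> X" for X unfolding f2_def by blast
      show "X \<in> lmeasurable" if "X \<in> A" for X using measZ that by blast
      show "f2 X \<in> lmeasurable" if "X \<in> A" for X unfolding f2_def using mA[OF that closed_halfspace_component_ge] .
      show "X' \<in> A" "0 < measure lebesgue X'" using X' by auto
      show "measure lebesgue (f2 X') = 0" unfolding f2_def using hyp0' X'(2) by blast
    qed
    have n3: "npos (g1 ` B) \<le> npos B"
    proof (rule npos_cut_le[OF finB])
      show "g1 X \<subseteq> X" for X unfolding g1_def by blast
      show "X \<in> lmeasurable" if "X \<in> B" for X using measZ that by blast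
      show "g1 X \<in> lmeasurable" if "X \<in> B" for X unfolding g1_def using mB[OF that closed_halfspace_component_le] .
    qed
    have n4: "npos (g2 ` B) \<le> npos B"
    proof (rule npos_cut_le[OF finB])
      show "g2 X \<subseteq> X" for X unfolding g2_def by blast
      show "X \<in> lmeasurable" if "X \<in> B" for X using measZ that by blast
      show "g2 X \<in> lmeasurable" if "X \<in> B" for X unfolding g2_def using mB[OF that closed_halfspace_component_ge] .
    qed
    have IH1: "min a1 y \<le> measure lebesgue (mid (SA \<inter> {x. x\<bullet>k \<le> c}) (SB \<inter> {x. x\<bullet>k \<le> c'}))"
      using IH[OF bf(1) bf(3)] n1 n3 un c' unfolding a1_def by (simp add: SA_def SB_def)
    have IH2: "min a2 (?b - y) \<le> measure lebesgue (mid (SA \<inter> {x. x\<bullet>k \<ge> c}) (SB \<inter> {x. x\<bullet>k \<ge> c'}))"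
      using IH[OF bf(2) bf(4)] n2 n4 un b2 unfolding a2_def by (simp add: SA_def SB_def)
    define M where "M = mid SA SB"
    define m where "m = (c + c') / 2"
    have cM: "compact M" unfolding M_def by (rule compact_mid[OF cA cB])
    have s1: "mid (SA \<inter> {x. x\<bullet>k \<le> c}) (SB \<inter> {x. x\<bullet>k \<le> c'}) \<subseteq> M \<inter> {x. x\<bullet>k \<le> m}"
    proof
      fix z assume "z \<in> mid (SA \<inter> {x. x\<bullet>k \<le> c}) (SB \<inter> {x. x\<bullet>k \<le> c'})"
      then obtain x y where xy: "x \<in> SA" "x\<bullet>k \<le> c" "y \<in> SB" "y\<bullet>k \<le> c'" "z = (1/2::real) *\<^sub>R x + (1/2::real) *\<^sub>R y"
        by (auto elim!: mid_memE)
      then have "z \<in> M" unfolding M_def using mid_memI by metis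
      moreover have "z\<bullet>k \<le> m" using xy unfolding m_def by (simp add: inner_add_left)
      ultimately show "z \<in> M \<inter> {x. x\<bullet>k \<le> m}" by simp
    qed
    have s2: "mid (SA \<inter> {x. x\<bullet>k \<ge> c}) (SB \<inter> {x. x\<bullet>k \<ge> c'}) \<subseteq> M \<inter> {x. x\<bullet>k \<ge> m}"
    proof
      fix z assume "z \<in> mid (SA \<inter> {x. x\<bullet>k \<ge> c}) (SB \<inter> {x. x\<bullet>k \<ge> c'})"
      then obtain x y where xy: "x \<in> SA" "x\<bullet>k \<ge> c" "y \<in> SB" "y\<bullet>k \<ge> c'" "z = (1/2::real) *\<^sub>R x + (1/2::real) *\<^sub>R y"
        by (auto elim!: mid_memE)
      then have "z \<in> M" unfolding M_def using mid_memI by metis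
      moreover have "z\<bullet>k \<ge> m" using xy unfolding m_def by (simp add: inner_add_left)
      ultimately show "z \<in> M \<inter> {x. x\<bullet>k \<ge> m}" by simp
    qed
    have cmp1: "compact (mid (SA \<inter> {x. x\<bullet>k \<le> c}) (SB \<inter> {x. x\<bullet>k \<le> c'}))"
      by (intro compact_mid compact_Int_closed cA cB closed_halfspace_component_le)
    have cmp2: "compact (mid (SA \<inter> {x. x\<bullet>k \<ge> c}) (SB \<inter> {x. x\<bullet>k \<ge> c'}))"
      by (intro compact_mid compact_Int_closed cA cB closed_halfspace_component_ge)
    have "measure lebesgue (mid (SA \<inter> {x. x\<bullet>k \<le> c}) (SB \<inter> {x. x\<bullet>k \<le> c'})) \<le> measure lebesgue (M \<inter> {x. x\<bullet>k \<le> m})"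
      by (intro measure_mono_fmeasurable[OF s1] fmeasurableD lmeasurable_compact cmp1 compact_Int_closed cM closed_halfspace_component_le)
    moreover have "measure lebesgue (mid (SA \<inter> {x. x\<bullet>k \<ge> c}) (SB \<inter> {x. x\<bullet>k \<ge> c'})) \<le> measure lebesgue (M \<inter> {x. x\<bullet>k \<ge> m})"
      by (intro measure_mono_fmeasurable[OF s2] fmeasurableD lmeasurable_compact cmp2 compact_Int_closed cM closed_halfspace_component_ge)
    moreover have "measure lebesgue M = measure lebesgue (M \<inter> {x. x\<bullet>k \<le> m}) + measure lebesgue (M \<inter> {x. x\<bullet>k \<ge> m})"
      by (rule split_measure[OF cM k])
    moreover have "min ?a ?b \<le> min a1 y + min a2 (?b - y)"
    proof -
      have e1: "y - a1 = a1 * (?b - ?a) / ?a" unfolding y_def using apos by (simp add: field_simps)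
      have e2: "(?b - y) - a2 = a2 * (?b - ?a) / ?a" unfolding y_def using apos asum by (simp add: field_simps)
      show ?thesis
      proof (cases "?a \<le> ?b")
        case True
        then have "0 \<le> y - a1" "0 \<le> (?b - y) - a2" unfolding e1 e2 using a10 a20 apos by simp_all
        then show ?thesis using True asum by (simp add: min_def)
      next
        case False
        then have "y - a1 \<le> 0" "(?b - y) - a2 \<le> 0" unfolding e1 e2 using a10 a20 apos
          by (simp_all add: divide_nonpos_pos mult_nonneg_nonpos)
        then show ?thesis using False asum by (simp add: min_def)
      qed
    qed
    ultimately show ?thesis using IH1 IH2 unfolding M_def SA_def SB_def by linarith
  qed
qed

lemma npos_small:
  assumes "boxfam F" "npos F \<le> 1"
  shows "measure lebesgue (\<Union>F) = 0 \<or> (\<exists>X\<in>F. (\<exists>a b. X = cbox a b) \<and> 0 < measure lebesgue X \<and> measure lebesgue (\<Union>F) = measure lebesgue X)"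
proof -
  let ?P = "{X\<in>F. 0 < measure lebesgue X}"
  have fin: "finite F" using assms(1) by (rule boxfam_finite)
  have "measure lebesgue (\<Union>F) = (\<Sum>X\<in>F. measure lebesgue X)" by (rule boxfam_measure[OF assms(1)])
  also have "\<dots> = (\<Sum>X\<in>?P. measure lebesgue X)"
    by (rule sum.mono_neutral_right[OF fin]) (auto simp: order.strict_iff_order)
  finally have eq: "measure lebesgue (\<Union>F) = (\<Sum>X\<in>?P. measure lebesgue X)" .
  show ?thesis
  proof (cases "?P = {}")
    case True
    have "(\<Sum>X\<in>?P. measure lebesgue X) = 0" unfolding True by simp
    then show ?thesis using eq by simp
  next
    case False
    then obtain X0 where X0: "X0 \<in> ?P" by blast
    have "card ?P \<le> Suc 0" using assms(2) unfolding npos_def by simp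
    then have "?P = {X0}" using card_le_Suc0_iff_eq[of ?P] fin X0 by auto
    then have "measure lebesgue (\<Union>F) = measure lebesgue X0" using eq by simp
    moreover obtain a b where "X0 = cbox a b" using boxfam_cboxE[OF assms(1)] X0 by blast
    ultimately show ?thesis using X0 by blast
  qed
qed

lemma bm_boxes:
  fixes F G :: "'a::euclidean_space set set"
  shows "boxfam F \<Longrightarrow> boxfam G \<Longrightarrow> min (measure lebesgue (\<Union>F)) (measure lebesgue (\<Union>G)) \<le> measure lebesgue (mid (\<Union>F) (\<Union>G))"
proof (induction "npos F + npos G" arbitrary: F G rule: less_induct)
  case (less F G)
  note IH = less.hyps
  show ?case
  proof (cases "2 \<le> npos F")
    case True
    show ?thesis
    proof (rule bm_step[OF _ less.prems True])
      fix F' G' :: "'a set set" assume "boxfam F'" "boxfam G'" "npos F' + npos G' < npos F + npos G"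
      then show "min (measure lebesgue (\<Union>F')) (measure lebesgue (\<Union>G')) \<le> measure lebesgue (mid (\<Union>F') (\<Union>G'))"
        using IH by blast
    qed
  next
    case c1: False
    show ?thesis
    proof (cases "2 \<le> npos G")
      case True
      have "min (measure lebesgue (\<Union>G)) (measure lebesgue (\<Union>F)) \<le> measure lebesgue (mid (\<Union>G) (\<Union>F))"
      proof (rule bm_step[OF _ less.prems(2) less.prems(1) True])
        fix G' F' :: "'a set set" assume "boxfam G'" "boxfam F'" "npos G' + npos F' < npos G + npos F"
        then have "min (measure lebesgue (\<Union>F')) (measure lebesgue (\<Union>G')) \<le> measure lebesgue (mid (\<Union>F') (\<Union>G'))"
          using IH[of F' G'] by simp
        then show "min (measure lebesgue (\<Union>G')) (measure lebesgue (\<Union>F')) \<le> measure lebesgue (mid (\<Union>G') (\<Union>F'))"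
          by (simp add: min.commute mid_commute)
      qed
      then show ?thesis by (simp add: min.commute mid_commute)
    next
      case False
      have cF: "compact (\<Union>F)" and cG: "compact (\<Union>G)" using less.prems boxfam_compact by blast+
      have mz: "0 \<le> measure lebesgue (mid (\<Union>F) (\<Union>G))" by simp
      show ?thesis
      proof (cases "measure lebesgue (\<Union>F) = 0 \<or> measure lebesgue (\<Union>G) = 0")
        case True
        then have "min (measure lebesgue (\<Union>F)) (measure lebesgue (\<Union>G)) \<le> 0"
          by (metis min.cobounded1 min.cobounded2 order_refl)
        then show ?thesis using mz by linarith
      next
        case nz: False
        obtain X0 a b where X0: "X0 \<in> F" "X0 = cbox a b" "0 < measure lebesgue X0" "measure lebesgue (\<Union>F) = measure lebesgue X0"
          using npos_small[OF less.prems(1)] c1 nz by force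
        obtain Y0 a' b' where Y0: "Y0 \<in> G" "Y0 = cbox a' b'" "0 < measure lebesgue Y0" "measure lebesgue (\<Union>G) = measure lebesgue Y0"
          using npos_small[OF less.prems(2)] False nz by force
        have "min (measure lebesgue X0) (measure lebesgue Y0) \<le> measure lebesgue (mid X0 Y0)"
          by (rule box_mid_base[OF X0(2) Y0(2) X0(3) Y0(3)])
        also have "\<dots> \<le> measure lebesgue (mid (\<Union>F) (\<Union>G))"
          using X0(1) Y0(1)
          by (intro measure_mono_fmeasurable mid_mono fmeasurableD lmeasurable_compact compact_mid cF cG) (auto simp: X0(2) Y0(2))
        finally show ?thesis using X0 Y0 by simp
      qed
    qed
  qed
qed



lemma inner_boxes:
  fixes U :: "'a::euclidean_space set"
  assumes "open U" "bounded U" "0 < e"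
  obtains F where "boxfam F" "\<Union>F \<subseteq> U" "measure lebesgue U - e < measure lebesgue (\<Union>F)"
proof -
  obtain \<D> where D: "countable \<D>" "\<D> \<subseteq> Pow U" "\<And>X. X \<in> \<D> \<Longrightarrow> \<exists>a b. X = cbox a b" "\<Union>\<D> = U"
    using open_countable_Union_open_cbox[OF assms(1)] by metis
  have UL: "U \<in> lmeasurable" using assms by (intro lmeasurable_open)
  have cb: "compact (\<Union>D')" if Dsub: "D' \<subseteq> \<D>" and Dfin: "finite D'" for D'
  proof (rule compact_Union[OF Dfin])
    fix X assume X: "X \<in> D'"
    have "\<exists>a b. X = cbox a b" using D(3) Dsub X by blast
    then obtain a b where "X = cbox a b" by blast
    then show "compact X" by simp
  qed
  obtain D' where D': "D' \<subseteq> \<D>" "finite D'" "measure lebesgue (\<Union>\<D>) - e < measure lebesgue (\<Union>D')"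
  proof (rule measure_countable_Union_approachable[OF D(1) assms(3)])
    show "d \<in> lmeasurable" if dD: "d \<in> \<D>" for d
    proof -
      have "\<exists>a b. d = cbox a b" using D(3) dD by blast
      then obtain a b where "d = cbox a b" by blast
      then show ?thesis by simp
    qed
    show "measure lebesgue (\<Union>D') \<le> measure lebesgue U" if "D' \<subseteq> \<D>" "finite D'" for D'
      using D(2) that by (intro measure_mono_fmeasurable[OF _ _ UL] fmeasurableD lmeasurable_compact cb) auto
  qed blast
  have "\<exists>a b. s = cbox a b" if "s \<in> D'" for s using D(3) D'(1) that by blast
  then obtain p where p: "p division_of (\<Union>D')" using elementary_unions_intervals[OF D'(2)] by metis
  have "boxfam p"
    unfolding boxfam_def pairwise_def using division_ofD(1,4,5)[OF p] by blast
  moreover have "\<Union>p \<subseteq> U" using division_ofD(6)[OF p] D'(1) D(2) by blast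
  moreover have "measure lebesgue U - e < measure lebesgue (\<Union>p)"
    using division_ofD(6)[OF p] D'(3) D(4) by simp
  ultimately show ?thesis using that by blast
qed

lemma measure_negations:
  fixes S :: "'a::euclidean_space set"
  shows "measure lebesgue (uminus ` S) = measure lebesgue S"
proof -
  have "uminus ` S = (\<lambda>x. (-1::real) *\<^sub>R x + 0) ` S" by simp
  then show ?thesis using measure_lebesgue_affine[of "-1" 0 S] by simp
qed

lemma bm_open:
  fixes U W :: "'a::euclidean_space set"
  assumes "open U" "bounded U" "compact W" "mid U (uminus ` U) \<subseteq> W"
  shows "measure lebesgue U \<le> measure lebesgue W"
proof (rule field_le_epsilon)
  fix e :: real assume e: "0 < e"
  obtain F where F: "boxfam F" "\<Union>F \<subseteq> U" "measure lebesgue U - e < measure lebesgue (\<Union>F)"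
    using inner_boxes[OF assms(1,2) e] by blast
  have o2: "open (uminus ` U)" using open_negations[OF assms(1)] by simp
  have b2: "bounded (uminus ` U)" using bounded_scaling[OF assms(2), of "-1"] by simp
  obtain G where G: "boxfam G" "\<Union>G \<subseteq> uminus ` U" "measure lebesgue (uminus ` U) - e < measure lebesgue (\<Union>G)"
    using inner_boxes[OF o2 b2 e] by blast
  have "min (measure lebesgue (\<Union>F)) (measure lebesgue (\<Union>G)) \<le> measure lebesgue (mid (\<Union>F) (\<Union>G))"
    by (rule bm_boxes[OF F(1) G(1)])
  also have "\<dots> \<le> measure lebesgue W"
  proof (rule measure_mono_fmeasurable)
    show "mid (\<Union>F) (\<Union>G) \<subseteq> W" using mid_mono[OF F(2) G(2)] assms(4) by blast
    show "mid (\<Union>F) (\<Union>G) \<in> sets lebesgue"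
      by (intro fmeasurableD lmeasurable_compact compact_mid boxfam_compact F(1) G(1))
    show "W \<in> fmeasurable lebesgue" by (rule lmeasurable_compact[OF assms(3)])
  qed
  finally have "min (measure lebesgue (\<Union>F)) (measure lebesgue (\<Union>G)) \<le> measure lebesgue W" .
  then show "measure lebesgue U \<le> measure lebesgue W + e"
    using F(3) G(3) measure_negations[of U] by linarith
qed

lemma gauge_set_ne:
  fixes L :: "'a::euclidean_space set"
  assumes "0 \<in> interior L"
  shows "{\<mu>. \<mu> > 0 \<and> x \<in> (\<lambda>y. \<mu> *\<^sub>R y) ` L} \<noteq> {}"
proof -
  obtain r where r: "r > 0" "cball 0 r \<subseteq> L" using assms mem_interior_cball by blast
  define \<mu> where "\<mu> = (norm x + 1) / r"
  have "0 < norm x + 1" using norm_ge_zero[of x] by linarith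
  then have mu: "\<mu> > 0" unfolding \<mu>_def using r by simp
  have "norm ((1/\<mu>) *\<^sub>R x) = norm x * r / (norm x + 1)" unfolding \<mu>_def using r by simp
  also have "\<dots> \<le> r"
  proof -
    have "0 < norm x + 1" using norm_ge_zero[of x] by linarith
    then have "norm x * r \<le> r * (norm x + 1)" using r by (simp add: algebra_simps)
    then show ?thesis using \<open>0 < norm x + 1\<close> by (simp add: divide_le_eq)
  qed
  finally have "(1/\<mu>) *\<^sub>R x \<in> L" using r by (auto simp: dist_norm)
  moreover have "x = \<mu> *\<^sub>R ((1/\<mu>) *\<^sub>R x)" using mu by simp
  ultimately show ?thesis using mu by blast
qed

lemma gauge_nonneg:
  fixes L :: "'a::euclidean_space set"
  assumes "0 \<in> interior L"
  shows "0 \<le> gauge_norm L x"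
  unfolding gauge_norm_def by (rule cInf_greatest[OF gauge_set_ne[OF assms]]) auto

lemma gauge_lt_mem:
  fixes L :: "'a::euclidean_space set"
  assumes "convex L" "0 \<in> interior L" "gauge_norm L x < \<mu>"
  shows "x \<in> (\<lambda>y. \<mu> *\<^sub>R y) ` L"
proof -
  obtain \<mu>' where m: "\<mu>' > 0" "x \<in> (\<lambda>y. \<mu>' *\<^sub>R y) ` L" "\<mu>' < \<mu>"
    using cInf_lessD[OF gauge_set_ne[OF assms(2)], where z = \<mu>] assms(3) unfolding gauge_norm_def by blast
  then obtain y where y: "y \<in> L" "x = \<mu>' *\<^sub>R y" by blast
  have z: "0 \<in> L" using assms(2) interior_subset by blast
  have "(\<mu>'/\<mu>) *\<^sub>R y + (1 - \<mu>'/\<mu>) *\<^sub>R 0 \<in> L"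
    by (rule convexD[OF assms(1) y(1) z]) (use m in auto)
  then have "(\<mu>'/\<mu>) *\<^sub>R y \<in> L" by simp
  moreover have "x = \<mu> *\<^sub>R ((\<mu>'/\<mu>) *\<^sub>R y)" using y m by simp
  ultimately show ?thesis by blast
qed

lemma gauge_pos:
  fixes L :: "'a::euclidean_space set"
  assumes "bounded L" "0 \<in> interior L" "x \<noteq> 0"
  shows "0 < gauge_norm L x"
proof -
  obtain R where R: "R > 0" "\<And>y. y \<in> L \<Longrightarrow> norm y \<le> R" using assms(1) bounded_pos by metis
  have "norm x / R \<le> gauge_norm L x"
    unfolding gauge_norm_def
  proof (rule cInf_greatest[OF gauge_set_ne[OF assms(2)]])
    fix \<mu> assume "\<mu> \<in> {\<mu>. \<mu> > 0 \<and> x \<in> (\<lambda>y. \<mu> *\<^sub>R y) ` L}"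
    then obtain y where y: "\<mu> > 0" "y \<in> L" "x = \<mu> *\<^sub>R y" by blast
    have "norm x = \<mu> * norm y" using y by simp
    also have "\<dots> \<le> \<mu> * R" using R(2)[OF y(2)] y(1) by simp
    finally show "norm x / R \<le> \<mu>" using R(1) by (simp add: divide_le_eq)
  qed
  moreover have "0 < norm x / R" using assms(3) R(1) by simp
  ultimately show ?thesis by linarith
qed

lemma gauge_lt_of_interior:
  fixes L :: "'a::euclidean_space set"
  assumes "0 < \<mu>" "y \<in> interior L"
  shows "gauge_norm L (\<mu> *\<^sub>R y) < \<mu>"
proof -
  obtain e where e: "e > 0" "cball y e \<subseteq> L" using assms(2) mem_interior_cball by blast
  define s where "s = e / (norm y + 1)"
  have n1: "0 < norm y + 1" using norm_ge_zero[of y] by linarith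
  then have s: "0 < s" unfolding s_def using e by simp
  have "norm ((1 + s) *\<^sub>R y - y) = s * norm y" using s by (simp add: algebra_simps)
  also have "\<dots> \<le> e"
  proof -
    have "e * norm y \<le> e * (norm y + 1)" using e by simp
    then show ?thesis unfolding s_def using n1 by (simp add: field_simps)
  qed
  finally have yL: "(1 + s) *\<^sub>R y \<in> L" using e by (auto simp: dist_norm norm_minus_commute)
  have eq: "\<mu> *\<^sub>R y = (\<mu> / (1 + s)) *\<^sub>R ((1 + s) *\<^sub>R y)" using s by simp
  have img: "\<mu> *\<^sub>R y \<in> (\<lambda>z. (\<mu> / (1 + s)) *\<^sub>R z) ` L"
    using eq yL by blast
  have pos: "\<mu> / (1 + s) > 0" using s assms(1) by simp
  have mem: "\<mu> / (1 + s) \<in> {\<mu>'. \<mu>' > 0 \<and> \<mu> *\<^sub>R y \<in> (\<lambda>y. \<mu>' *\<^sub>R y) ` L}"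
    unfolding mem_Collect_eq using pos img by blast
  have "gauge_norm L (\<mu> *\<^sub>R y) \<le> \<mu> / (1 + s)"
    unfolding gauge_norm_def by (rule cInf_lower[OF mem]) (rule bdd_belowI[where m = 0], simp)
  also have "\<dots> < \<mu>" using s assms(1) by (simp add: divide_less_eq)
  finally show ?thesis .
qed

lemma le_limit_power:
  fixes a b c :: real
  assumes "\<And>\<eta>. 0 < \<eta> \<Longrightarrow> a \<le> (b + \<eta>)^n * c"
  shows "a \<le> b^n * c"
proof -
  have "(\<lambda>k. (b + inverse (real (Suc k)))^n * c) \<longlonglongrightarrow> (b + 0)^n * c"
    by (intro tendsto_intros LIMSEQ_inverse_real_of_nat)
  then have lim: "(\<lambda>k. (b + inverse (real (Suc k)))^n * c) \<longlonglongrightarrow> b^n * c" by simp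
  show ?thesis
  proof (rule LIMSEQ_le_const[OF lim])
    show "\<exists>N. \<forall>k\<ge>N. a \<le> (b + inverse (real (Suc k))) ^ n * c"
      using assms by (intro exI[of _ 0] allI impI) simp
  qed
qed



theorem lemma13:
  fixes K :: "'a::euclidean_space set" and lam :: real
  assumes "convex_body K" and "0 \<in> interior K" and "lam > 0"
  shows "\<forall>S. finite S \<and> admissible K lam S \<longrightarrow>
           real (card S) \<le> (lam + 1) ^ DIM('a) *
             (measure lebesgue (half_diff K) / measure lebesgue (sym_inter K))"
proof (intro allI impI, elim conjE)
  fix S :: "'a set" assume fin: "finite S" and adm: "admissible K lam S"
  define C where "C = sym_inter K"
  define D where "D = half_diff K"
  have cK: "compact K" and cvK: "convex K" using assms(1) unfolding convex_body_def by auto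
  obtain r where r: "r > 0" "cball 0 r \<subseteq> K" using assms(2) mem_interior_cball by blast
  have Ceq: "C = K \<inter> uminus ` K" unfolding C_def sym_inter_def ..
  have negK: "- x \<in> uminus ` K" if "x \<in> K" for x using that by blast
  have negC: "- x \<in> C" if "x \<in> C" for x
  proof -
    have "x \<in> K" "x \<in> uminus ` K" using that Ceq by auto
    then obtain y where "y \<in> K" "x = - y" by blast
    then have "- x \<in> K" by simp
    moreover have "- x \<in> uminus ` K" using \<open>x \<in> K\<close> by blast
    ultimately show ?thesis using Ceq by simp
  qed
  have cballC: "cball 0 r \<subseteq> C"
  proof
    fix x :: 'a assume x: "x \<in> cball 0 r"
    then have "x \<in> K" using r by blast
    moreover have "- x \<in> cball 0 r" using x by simp
    then have "- x \<in> K" using r by blast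
    then have "- (- x) \<in> uminus ` K" by (rule negK)
    ultimately show "x \<in> C" using Ceq by simp
  qed
  have intC: "0 \<in> interior C" using cballC r mem_interior_cball by blast
  have cvC: "convex C" unfolding Ceq using convex_negations[OF cvK] cvK by (intro convex_Int) auto
  have cC: "compact C" unfolding Ceq
    using compact_negations[OF cK] by (intro compact_Int_closed cK compact_imp_closed) auto
  have bC: "bounded C" using cC by (rule compact_imp_bounded)
  have mCpos: "0 < measure lebesgue C"
  proof -
    have "measure lebesgue (ball (0::'a) r) = measure lborel (ball (0::'a) r)" by simp
    then have "0 < measure lebesgue (ball (0::'a) r)" using content_ball_pos[OF r(1)] by simp
    also have "\<dots> \<le> measure lebesgue C"
      using cballC by (intro measure_mono_fmeasurable lmeasurable_compact cC) auto
    finally show ?thesis .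
  qed
  define f :: "'a \<times> 'a \<Rightarrow> 'a" where "f = (\<lambda>p. (1/2::real) *\<^sub>R (fst p - snd p))"
  have Deq: "D = f ` (K \<times> K)" unfolding D_def half_diff_def f_def by force
  have linf: "linear f" unfolding f_def by (rule linearI) (simp_all add: algebra_simps)
  have cD: "compact D" unfolding Deq f_def
    by (intro compact_continuous_image compact_Times cK continuous_intros)
  have cvD: "convex D" unfolding Deq by (intro convex_linear_image linf convex_Times cvK)
  have CsubD: "C \<subseteq> D"
  proof
    fix x assume x: "x \<in> C"
    have "x \<in> K" "- x \<in> K" using x negC[OF x] Ceq by auto
    moreover have "x = f (x, - x)" unfolding f_def by (simp add: scaleR_2 flip: scaleR_2)
    ultimately show "x \<in> D" unfolding Deq by blast
  qed
  have intD: "0 \<in> interior D" using intC interior_mono[OF CsubD] by blast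
  have D0: "0 \<in> D" using intD interior_subset by blast
  have mCD: "measure lebesgue C \<le> measure lebesgue D"
    using CsubD by (intro measure_mono_fmeasurable lmeasurable_compact cD fmeasurableD cC)
  have rat: "1 \<le> measure lebesgue D / measure lebesgue C" using mCD mCpos by simp
  have lp: "1 \<le> (lam + 1) ^ DIM('a)" using assms(3) by (intro one_le_power) simp
  show "real (card S) \<le> (lam + 1) ^ DIM('a) * (measure lebesgue (half_diff K) / measure lebesgue (sym_inter K))"
  proof (cases "card S \<le> 1")
    case True
    have "real (card S) \<le> 1" using True by simp
    also have "1 \<le> (lam + 1) ^ DIM('a) * (measure lebesgue D / measure lebesgue C)"
    proof -
      have "0 \<le> (lam + 1) ^ DIM('a)" using assms(3) by simp
      from mult_mono[OF lp rat this] show ?thesis by simp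
    qed
    finally show ?thesis unfolding C_def D_def .
  next
    case False
    then obtain p0 q0 where pq0: "p0 \<in> S" "q0 \<in> S" "p0 \<noteq> q0"
      using card_le_Suc0_iff_eq[OF fin] by auto
    define P where "P = {(p, q). p \<in> S \<and> q \<in> S \<and> p \<noteq> q}"
    have finP: "finite P" by (rule finite_subset[of P "S \<times> S"]) (auto simp: P_def fin)
    have neP: "P \<noteq> {}" using pq0 unfolding P_def by blast
    define g where "g = (\<lambda>(p, q). gauge_norm C (p - q))"
    define \<delta> where "\<delta> = Min (g ` P)"
    have "\<delta> \<in> g ` P" unfolding \<delta>_def using finP neP by (intro Min_in) auto
    then obtain p1 q1 where pq1: "p1 \<in> S" "q1 \<in> S" "p1 \<noteq> q1" "\<delta> = gauge_norm C (p1 - q1)"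
      unfolding P_def g_def by auto
    have dmin: "\<delta> \<le> gauge_norm C (p - q)" if "p \<in> S" "q \<in> S" "p \<noteq> q" for p q
    proof -
      have "g (p, q) \<in> g ` P" using that unfolding P_def by blast
      then show ?thesis unfolding \<delta>_def using finP by (simp add: g_def)
    qed
    have dpos: "0 < \<delta>" unfolding pq1(4) by (rule gauge_pos[OF bC intC]) (use pq1 in simp)
    have Dbound: "gauge_norm D (p - q) \<le> lam * \<delta>" if "p \<in> S" "q \<in> S" "p \<noteq> q" for p q
      using adm that pq1 unfolding admissible_def C_def D_def by blast
    define t where "t = \<delta> / 2"
    have tpos: "0 < t" unfolding t_def using dpos by simp
    define piece where "piece p = (\<lambda>x. t *\<^sub>R x + p) ` interior C" for p
    define U where "U = (\<Union>p\<in>S. piece p)"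
    have piece_alt: "piece p = (\<lambda>x. p + t *\<^sub>R x) ` interior C" for p
      unfolding piece_def by (simp add: add.commute)
    have open_piece: "open (piece p)" for p
      unfolding piece_alt using tpos by (intro open_affinity open_interior) auto
    have bounded_piece: "bounded (piece p)" for p
    proof -
      have "compact ((\<lambda>x. t *\<^sub>R x + p) ` C)" by (intro compact_continuous_image continuous_intros cC)
      moreover have "piece p \<subseteq> (\<lambda>x. t *\<^sub>R x + p) ` C" unfolding piece_def using interior_subset by blast
      ultimately show ?thesis using compact_imp_bounded bounded_subset by blast
    qed
    have meas_piece: "measure lebesgue (piece p) = t ^ DIM('a) * measure lebesgue C" for p
    proof -
      have "measure lebesgue (piece p) = \<bar>t\<bar> ^ DIM('a) * measure lebesgue (interior C)"
        unfolding piece_def by (rule measure_lebesgue_affine)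
      also have "measure lebesgue (interior C) = measure lebesgue C"
        by (rule measure_interior[OF bC negligible_convex_frontier[OF cvC]])
      finally show ?thesis using tpos by simp
    qed
    have disj: "piece p \<inter> piece q = {}" if "p \<in> S" "q \<in> S" "p \<noteq> q" for p q
    proof (rule ccontr)
      assume "piece p \<inter> piece q \<noteq> {}"
      then obtain c1 c2 where c: "c1 \<in> interior C" "c2 \<in> interior C" "t *\<^sub>R c1 + p = t *\<^sub>R c2 + q"
        unfolding piece_def by auto
      have nc1: "- c1 \<in> interior C"
      proof -
        obtain e where e: "e > 0" "cball c1 e \<subseteq> C" using c(1) mem_interior_cball by blast
        have "cball (- c1) e \<subseteq> C"
        proof
          fix z assume "z \<in> cball (- c1) e"
          then have "- z \<in> cball c1 e" by (simp add: dist_norm norm_minus_commute algebra_simps)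
          then have "- z \<in> C" using e by blast
          then show "z \<in> C" using negC by fastforce
        qed
        then show ?thesis using e mem_interior_cball by blast
      qed
      define w where "w = (1/2::real) *\<^sub>R c2 + (1/2::real) *\<^sub>R (- c1)"
      have w: "w \<in> interior C" unfolding w_def
        by (rule convexD[OF convex_interior[OF cvC] c(2) nc1]) auto
      have "p - q = t *\<^sub>R c2 - t *\<^sub>R c1" using c(3) by (simp add: algebra_simps)
      also have "\<dots> = \<delta> *\<^sub>R w" unfolding w_def t_def by (simp add: algebra_simps)
      finally have "gauge_norm C (p - q) < \<delta>" using gauge_lt_of_interior[OF dpos w] by simp
      then show False using dmin[OF that] by simp
    qed
    have measU: "measure lebesgue U = real (card S) * (t ^ DIM('a) * measure lebesgue C)"
    proof -
      have "measure lebesgue U = (\<Sum>p\<in>S. measure lebesgue (piece p))"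
        unfolding U_def
      proof (rule measure_negligible_finite_Union_image[OF fin])
        show "piece p \<in> lmeasurable" if "p \<in> S" for p by (intro lmeasurable_open bounded_piece open_piece)
        show "pairwise (\<lambda>x y. negligible (piece x \<inter> piece y)) S"
          unfolding pairwise_def using disj by simp
      qed
      then show ?thesis by (simp add: meas_piece)
    qed
    have openU: "open U" unfolding U_def using open_piece by blast
    have boundedU: "bounded U" unfolding U_def using fin bounded_piece by blast
    have key: "real (card S) * (t ^ DIM('a) * measure lebesgue C) \<le> (lam * \<delta> / 2 + t + \<eta>) ^ DIM('a) * measure lebesgue D"
      if eta: "0 < \<eta>" for \<eta>
    proof -
      define \<rho> where "\<rho> = lam * \<delta> / 2 + t + \<eta>"
      have rpos: "0 < \<rho>" unfolding \<rho>_def using tpos eta mult_pos_pos[OF assms(3) dpos] by linarith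
      define W where "W = (\<lambda>x. \<rho> *\<^sub>R x) ` D"
      have cW: "compact W" unfolding W_def by (rule compact_scaling[OF cD])
      have sub: "mid U (uminus ` U) \<subseteq> W"
      proof
        fix z assume "z \<in> mid U (uminus ` U)"
        then obtain y1 y2 where y: "y1 \<in> U" "y2 \<in> uminus ` U" "z = (1/2::real) *\<^sub>R y1 + (1/2::real) *\<^sub>R y2"
          by (rule mid_memE)
        obtain p c1 where pc1: "p \<in> S" "c1 \<in> interior C" "y1 = t *\<^sub>R c1 + p"
          using y(1) unfolding U_def piece_def by blast
        obtain q c2 where qc2: "q \<in> S" "c2 \<in> interior C" "y2 = - (t *\<^sub>R c2 + q)"
          using y(2) unfolding U_def piece_def by blast
        define \<Delta> where "\<Delta> = lam * \<delta> + 2 * \<eta>"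
        have Dpos: "0 < \<Delta>" unfolding \<Delta>_def using eta mult_pos_pos[OF assms(3) dpos] by linarith
        obtain d0 where d0: "d0 \<in> D" "p - q = \<Delta> *\<^sub>R d0"
        proof (cases "p = q")
          case True then show ?thesis using that D0 by simp
        next
          case False
          have "gauge_norm D (p - q) < \<Delta>" using Dbound[OF pc1(1) qc2(1) False] eta unfolding \<Delta>_def by simp
          then have "p - q \<in> (\<lambda>y. \<Delta> *\<^sub>R y) ` D" by (rule gauge_lt_mem[OF cvD intD])
          then show ?thesis using that by blast
        qed
        define w where "w = (1/2::real) *\<^sub>R c1 + (1/2::real) *\<^sub>R (- c2)"
        have c1C: "c1 \<in> C" and c2C: "- c2 \<in> C"
          using pc1(2) qc2(2) interior_subset negC by blast+
        have wC: "w \<in> C" unfolding w_def by (rule convexD[OF cvC c1C c2C]) auto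
        have wD: "w \<in> D" using wC CsubD by blast
        have "z = (1/2::real) *\<^sub>R (p - q) + t *\<^sub>R w"
          unfolding y(3) pc1(3) qc2(3) w_def by (simp add: algebra_simps)
        also have "\<dots> = (\<Delta>/2) *\<^sub>R d0 + t *\<^sub>R w" using d0(2) by simp
        also have "\<dots> = \<rho> *\<^sub>R (((\<Delta>/2)/\<rho>) *\<^sub>R d0 + (t/\<rho>) *\<^sub>R w)"
          using rpos by (simp add: algebra_simps)
        finally have zeq: "z = \<rho> *\<^sub>R (((\<Delta>/2)/\<rho>) *\<^sub>R d0 + (t/\<rho>) *\<^sub>R w)" .
        have "((\<Delta>/2)/\<rho>) *\<^sub>R d0 + (t/\<rho>) *\<^sub>R w \<in> D"
        proof (rule convexD[OF cvD d0(1) wD])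
          show "0 \<le> (\<Delta>/2)/\<rho>" using Dpos rpos by simp
          show "0 \<le> t/\<rho>" using tpos rpos by simp
          have "\<Delta>/2 + t = \<rho>" unfolding \<Delta>_def \<rho>_def by simp
          then have "(\<Delta>/2 + t)/\<rho> = 1" using rpos by simp
          then show "(\<Delta>/2)/\<rho> + t/\<rho> = 1" by (simp only: add_divide_distrib)
        qed
        then show "z \<in> W" unfolding W_def zeq by blast
      qed
      have "measure lebesgue U \<le> measure lebesgue W" by (rule bm_open[OF openU boundedU cW sub])
      also have "measure lebesgue W = \<bar>\<rho>\<bar> ^ DIM('a) * measure lebesgue D"
        unfolding W_def using measure_lebesgue_affine[of \<rho> 0 D] by simp
      finally show ?thesis using measU rpos unfolding \<rho>_def by simp
    qed
    have "real (card S) * (t ^ DIM('a) * measure lebesgue C) \<le> (lam * \<delta> / 2 + t) ^ DIM('a) * measure lebesgue D"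
      by (rule le_limit_power) (use key in simp)
    also have "lam * \<delta> / 2 + t = (lam + 1) * t" unfolding t_def by (simp add: algebra_simps)
    finally have "real (card S) * (t ^ DIM('a) * measure lebesgue C) \<le> (lam + 1) ^ DIM('a) * t ^ DIM('a) * measure lebesgue D"
      by (simp add: power_mult_distrib)
    then have "t ^ DIM('a) * (real (card S) * measure lebesgue C) \<le> t ^ DIM('a) * ((lam + 1) ^ DIM('a) * measure lebesgue D)"
      by (simp add: algebra_simps)
    then have "real (card S) * measure lebesgue C \<le> (lam + 1) ^ DIM('a) * measure lebesgue D"
      using tpos by (simp add: mult_le_cancel_left_pos)
    then have "real (card S) \<le> (lam + 1) ^ DIM('a) * measure lebesgue D / measure lebesgue C"
      using mCpos by (simp add: pos_le_divide_eq)
    then show ?thesis unfolding C_def D_def by simp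
  qed
qed

end
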